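(* Let $g(t)=\sum_{n\ge0}g_nt^n$ be a formal power series with $g_0=1$ and $f(t)=\sum_{n\ge1}f_nt^n$ a formal power series with $f_1\neq0$. Put $z_0=f_1$, $w_0=g_1$ and define the formal power series \[ Z(t)=\frac{f(t)-z_0t\,g(t)}{f(t)}+z_0=\sum_{k\ge0}z_kt^k,\qquad W(t)=\frac{(1-w_0t)g(t)-1}{f(t)}+w_0=\sum_{k\ge0}w_kt^k . \] Let $J=(J_{i,j})_{i,j\ge0}$ be the infinite matrix with $J_{i,0}=w_i$, $J_{i,1}=z_i$ for all $i\ge0$, $J_{i,i+1}=1$ for $i\ge1$, and all other entries $0$; i.e. \[ J=\begin{bmatrix} w_0&z_0&&&\\ w_1&z_1&1&&\\ w_2&z_2&0&1&\\ w_3&z_3&0&0&1\\ \vdots&\vdots&&&&\ddots\end{bmatrix}. \] Then $[g,f]\,J=\overline{[g,f]}$, where $\overline{[g,f]}$ denotes the matrix obtained from the quasi-Riordan array $[g,f]$ by deleting its first (i.e. $0$th) row.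
   Context: The quasi-Riordan array $[g,f]$ is the infinite lower triangular matrix $(r_{n,k})_{n,k\ge0}$ whose $0$th column has generating function $g$ and whose $k$th column ($k\ge1$) has generating function $t^{k-1}f(t)$, i.e. $r_{n,0}=g_n$ and $r_{n,k}=f_{n-k+1}$ for $k\ge1$ (with $f_j=0$ for $j\le0$). (Under the stated choices of $z_0,w_0$, the expressions defining $Z$ and $W$ are genuine formal power series.) *)

theory Defs
  imports "HOL-Computational_Algebra.Formal_Power_Series"
begin

text \<open>Quasi-Riordan array [g,f]: column 0 has g.f. g, column k>=1 has g.f. t^(k-1) f(t),
  i.e. r(n,0) = g_n and r(n,k) = f_(n-k+1) for k>=1, with f_j = 0 for j <= 0.\<close>
definition quasi_riordan :: "'a::field fps \<Rightarrow> 'a fps \<Rightarrow> nat \<Rightarrow> nat \<Rightarrow> 'a" where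
  "quasi_riordan g f n k =
     (if k = 0 then fps_nth g n else if k \<le> n then fps_nth f (n + 1 - k) else 0)"

text \<open>Product of an infinite lower triangular matrix A with an arbitrary infinite matrix B:
  (A B)(n,j) = sum over k of A(n,k) B(k,j); since A(n,k)=0 for k>n the sum is over k<=n.\<close>
definition lt_mat_mult :: "(nat \<Rightarrow> nat \<Rightarrow> 'a::comm_ring_1) \<Rightarrow> (nat \<Rightarrow> nat \<Rightarrow> 'a) \<Rightarrow> nat \<Rightarrow> nat \<Rightarrow> 'a" where
  "lt_mat_mult A B n j = (\<Sum>k\<le>n. A n k * B k j)"

definition Zser :: "'a::field fps \<Rightarrow> 'a fps \<Rightarrow> 'a fps" where
  "Zser g f = (f - fps_const (fps_nth f 1) * fps_X * g) / f + fps_const (fps_nth f 1)"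

definition Wser :: "'a::field fps \<Rightarrow> 'a fps \<Rightarrow> 'a fps" where
  "Wser g f = ((1 - fps_const (fps_nth g 1) * fps_X) * g - 1) / f + fps_const (fps_nth g 1)"

definition Jmat :: "'a::field fps \<Rightarrow> 'a fps \<Rightarrow> nat \<Rightarrow> nat \<Rightarrow> 'a" where
  "Jmat g f i j =
     (if j = 0 then fps_nth (Wser g f) i
      else if j = 1 then fps_nth (Zser g f) i
      else if i \<ge> 1 \<and> j = i + 1 then 1 else 0)"

end

theory Submission
  imports Defs
begin

unbundle fps_syntax

lemma div_mult_back:
  fixes a f :: "'a::field fps"
  assumes "a $ 0 = 0" "f $ 0 = 0" "f $ 1 \<noteq> 0"
  shows "a / f * f = a"
proof (cases "a = 0")
  case True then show ?thesis by simp
next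
  case False
  have f0: "f \<noteq> 0" using assms(3) by auto
  have sf: "subdegree f = 1" using assms(2,3) by (intro subdegreeI) auto
  have "subdegree a \<ge> 1" using False assms(1) by (intro subdegree_geI) auto
  then show ?thesis using f0 sf fps_times_divide_eq[of f a] by simp
qed

lemma conv_split:
  fixes f S :: "'a::field fps"
  assumes "f $ 0 = 0"
  shows "(f * S) $ Suc n = f $ Suc n * S $ 0 + (\<Sum>k\<in>{1..n}. f $ (Suc n - k) * S $ k)"
proof -
  have "(f * S) $ Suc n = (S * f) $ Suc n" by (simp add: mult.commute)
  also have "\<dots> = (\<Sum>i=0..Suc n. S $ i * f $ (Suc n - i))" by (rule fps_mult_nth)
  also have "\<dots> = (\<Sum>i=0..n. S $ i * f $ (Suc n - i))" using assms by simp
  also have "\<dots> = S $ 0 * f $ Suc n + (\<Sum>i=1..n. S $ i * f $ (Suc n - i))"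
    by (simp add: sum.atLeast_Suc_atMost)
  finally show ?thesis by (simp add: mult.commute)
qed

lemma sum_split0:
  "(\<Sum>k\<le>n. h k) = h 0 + (\<Sum>k\<in>{1..n}. h k)" for h :: "nat \<Rightarrow> 'a::comm_monoid_add"
  by (simp add: atMost_atLeast0 sum.atLeast_Suc_atMost)

theorem proposition3p1:
  fixes g f :: "'a::field fps"
  assumes "fps_nth g 0 = 1" and "fps_nth f 0 = 0" and "fps_nth f 1 \<noteq> 0"
  shows "\<forall>n j. lt_mat_mult (quasi_riordan g f) (Jmat g f) n j = quasi_riordan g f (n + 1) j"
proof (intro allI)
  fix n j
  let ?R = "quasi_riordan g f"
  define W where "W = Wser g f"
  define Z where "Z = Zser g f"
  define w0 where "w0 = g $ 1"
  define z0 where "z0 = f $ 1"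
  have LHS: "lt_mat_mult ?R (Jmat g f) n j = g $ n * Jmat g f 0 j
      + (\<Sum>k\<in>{1..n}. f $ (Suc n - k) * Jmat g f k j)"
    unfolding lt_mat_mult_def by (simp add: sum_split0 quasi_riordan_def)
  show "lt_mat_mult ?R (Jmat g f) n j = ?R (n + 1) j"
  proof (cases "j = 0")
    case True
    have "((1 - fps_const w0 * fps_X) * g - 1) / f * f = (1 - fps_const w0 * fps_X) * g - 1"
      using assms by (intro div_mult_back) auto
    hence "f * W = (1 - fps_const w0 * fps_X) * g - 1 + fps_const w0 * f"
      by (simp add: W_def Wser_def w0_def algebra_simps)
    note EQW = this
    have "(f * W) $ 1 = ((1 - fps_const w0 * fps_X) * g - 1 + fps_const w0 * f) $ 1"
      using EQW by simp
    also have "\<dots> = w0 * f $ 1"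
      using assms by (simp add: ring_distribs mult.assoc w0_def fps_mult_nth_1)
    finally have E1: "(f * W) $ 1 = w0 * f $ 1" .
    have W0: "W $ 0 = w0"
      using E1 assms by (simp only: fps_mult_nth_1) simp
    have "(f * W) $ Suc n = ((1 - fps_const w0 * fps_X) * g - 1 + fps_const w0 * f) $ Suc n"
      using EQW by simp
    also have "\<dots> = g $ Suc n - w0 * g $ n + w0 * f $ Suc n"
      by (simp add: ring_distribs mult.assoc)
    finally have "(\<Sum>k\<in>{1..n}. f $ (Suc n - k) * W $ k) = g $ Suc n - w0 * g $ n"
      using conv_split[OF assms(2), of W n] W0 by (simp add: algebra_simps)
    moreover have "(\<Sum>k\<in>{1..n}. f $ (Suc n - k) * Jmat g f k j) = (\<Sum>k\<in>{1..n}. f $ (Suc n - k) * W $ k)"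
      using True by (simp add: Jmat_def W_def)
    ultimately show ?thesis using True LHS W0
      by (simp add: Jmat_def W_def quasi_riordan_def)
  next
    case F0: False
    show ?thesis
    proof (cases "j = 1")
      case True
      have "(f - fps_const z0 * fps_X * g) / f * f = f - fps_const z0 * fps_X * g"
        using assms by (intro div_mult_back) auto
      hence "f * Z = f - fps_const z0 * fps_X * g + fps_const z0 * f"
        by (simp add: Z_def Zser_def z0_def algebra_simps)
    note EQZ = this
    have "(f * Z) $ 1 = (f - fps_const z0 * fps_X * g + fps_const z0 * f) $ 1"
      using EQZ by simp
    also have "\<dots> = z0 * f $ 1"
      using assms by (simp add: ring_distribs mult.assoc z0_def fps_mult_nth_1)
    finally have E1: "(f * Z) $ 1 = z0 * f $ 1" .
    have Z0: "Z $ 0 = z0"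
      using E1 assms by (simp only: fps_mult_nth_1) simp
      have "(f * Z) $ Suc n = (f - fps_const z0 * fps_X * g + fps_const z0 * f) $ Suc n"
        using EQZ by simp
      also have "\<dots> = f $ Suc n - z0 * g $ n + z0 * f $ Suc n"
        by (simp add: ring_distribs mult.assoc)
      finally have "(\<Sum>k\<in>{1..n}. f $ (Suc n - k) * Z $ k) = f $ Suc n - z0 * g $ n"
        using conv_split[OF assms(2), of Z n] Z0 by (simp add: algebra_simps)
      moreover have "(\<Sum>k\<in>{1..n}. f $ (Suc n - k) * Jmat g f k j) = (\<Sum>k\<in>{1..n}. f $ (Suc n - k) * Z $ k)"
        using True by (simp add: Jmat_def Z_def)
      ultimately show ?thesis using True LHS Z0
        by (simp add: Jmat_def Z_def quasi_riordan_def)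
    next
      case False
      have J0: "Jmat g f 0 j = 0" using F0 False by (simp add: Jmat_def)
      have "(\<Sum>k\<in>{1..n}. f $ (Suc n - k) * Jmat g f k j)
          = (\<Sum>k\<in>{1..n}. if k = j - 1 then f $ (Suc n - k) else 0)"
        using F0 False by (intro sum.cong) (auto simp: Jmat_def)
      also have "\<dots> = (if j - 1 \<le> n then f $ (Suc n - (j - 1)) else 0)"
        using F0 False by (simp add: sum.delta)
      finally show ?thesis using LHS J0 F0 False
        by (auto simp: quasi_riordan_def Suc_diff_le)
    qed
  qed
qed

end
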